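(* Let $M\ge0$. There is no infinite antichain $S_1,S_2,\dots$ in $(\mathrm{RL},\le_{RL})$, with $S_i$ of type $(d_i,n_i)$, for which the sequence $(n_i)_i$ is bounded.
   Context: Fix an integer $M\ge0$. A reading list of type $(d,n)$ is a tuple $S=(S^1,\dots,S^n)$ of $d$-element subsets of $[Md]=\{1,\dots,Md\}$ (each $S^i$ viewed as an increasing word). $\mathrm{RL}$ denotes the set of all reading lists of all types. For $S=(S^1,\dots,S^n)$ of type $(d,n)$ and $T=(T^1,\dots,T^m)$ of type $(e,m)$, define $S\le_{RL}T$ iff there exist indices $1\le k_1<k_2<\cdots<k_n\le m$ and maps $f_i:S^i\to T^{k_i}$ ($i=1,\dots,n$), each strictly increasing, such that $f_i(x)=f_j(x)$ for all $i,j$ and all $x\in S^i\cap S^j$. An antichain is a sequence of pairwise incomparable elements. *)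

theory Defs
  imports Main
begin

text \<open>A reading list of type (d,n) (for fixed M) is represented as a pair (d, S)
  where S is a list of length n of d-element subsets of {1..M*d}.\<close>

type_synonym reading_list = "nat \<times> nat set list"

definition RL :: "nat \<Rightarrow> reading_list set" where
  "RL M = {(d, S). \<forall>A \<in> set S. A \<subseteq> {1..M * d} \<and> card A = d}"

definition rl_type :: "reading_list \<Rightarrow> nat \<times> nat" where
  "rl_type R = (fst R, length (snd R))"

definition le_RL :: "reading_list \<Rightarrow> reading_list \<Rightarrow> bool" where
  "le_RL R R' \<longleftrightarrow>
     (let S = snd R; T = snd R'; n = length S; m = length T in
      \<exists>k :: nat \<Rightarrow> nat. \<exists>f :: nat \<Rightarrow> nat \<Rightarrow> nat.
        strict_mono_on {..<n} k \<and> (\<forall>i<n. k i < m) \<and>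
        (\<forall>i<n. strict_mono_on (S ! i) (f i) \<and> f i ` (S ! i) \<subseteq> T ! (k i)) \<and>
        (\<forall>i<n. \<forall>j<n. \<forall>x \<in> S ! i \<inter> S ! j. f i x = f j x))"

definition antichain_seq_RL :: "nat \<Rightarrow> (nat \<Rightarrow> reading_list) \<Rightarrow> bool" where
  "antichain_seq_RL M Sq \<longleftrightarrow>
     (\<forall>i. Sq i \<in> RL M) \<and> (\<forall>i j. i \<noteq> j \<longrightarrow> \<not> le_RL (Sq i) (Sq j))"

end

theory Submission
  imports Defs "HOL-Library.Sublist" "HOL-Library.Infinite_Set"
begin

definition badA :: "'a set \<Rightarrow> (nat \<Rightarrow> 'a list) \<Rightarrow> bool" where
  "badA A f \<longleftrightarrow> (\<forall>i. set (f i) \<subseteq> A) \<and> (\<forall>i j. i < j \<longrightarrow> \<not> subseq (f i) (f j))"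

definition extA :: "'a set \<Rightarrow> 'a list list \<Rightarrow> (nat \<Rightarrow> 'a list) set" where
  "extA A p = {g. badA A g \<and> (\<forall>i<length p. g i = p ! i)}"

definition chooseA :: "'a set \<Rightarrow> 'a list list \<Rightarrow> 'a list" where
  "chooseA A p = (SOME w. \<exists>g\<in>extA A p. g (length p) = w \<and>
      (\<forall>h\<in>extA A p. length w \<le> length (h (length p))))"

primrec preA :: "'a set \<Rightarrow> nat \<Rightarrow> 'a list list" where
  "preA A 0 = []"
| "preA A (Suc n) = preA A n @ [chooseA A (preA A n)]"

definition mbs :: "'a set \<Rightarrow> nat \<Rightarrow> 'a list" where
  "mbs A i = preA A (Suc i) ! i"

lemma chooseA_spec:
  assumes "extA A p \<noteq> {}"
  shows "\<exists>g\<in>extA A p. g (length p) = chooseA A p \<and>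
      (\<forall>h\<in>extA A p. length (chooseA A p) \<le> length (h (length p)))"
proof -
  from assms obtain g0 where g0: "g0 \<in> extA A p" by blast
  from ex_has_least_nat[of "\<lambda>g. g \<in> extA A p" g0 "\<lambda>g. length (g (length p))", OF g0]
  obtain g where g: "g \<in> extA A p" "\<forall>h. h \<in> extA A p \<longrightarrow> length (g (length p)) \<le> length (h (length p))"
    by blast
  hence "\<exists>w. \<exists>g\<in>extA A p. g (length p) = w \<and> (\<forall>h\<in>extA A p. length w \<le> length (h (length p)))"
    by blast
  then show ?thesis unfolding chooseA_def by (rule someI_ex)
qed

lemma length_preA: "length (preA A n) = n" by (induct n) auto

lemma preA_nonempty: "badA A f \<Longrightarrow> extA A (preA A n) \<noteq> {}"
proof (induct n)
  case 0 then show ?case by (auto simp: extA_def)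
next
  case (Suc n)
  then obtain g where g: "g \<in> extA A (preA A n)" "g n = chooseA A (preA A n)"
    using chooseA_spec[of A "preA A n"] by (auto simp: length_preA)
  have "g \<in> extA A (preA A (Suc n))"
    using g by (auto simp: extA_def length_preA nth_append less_Suc_eq)
  then show ?case by blast
qed

lemma preA_nth: "i < n \<Longrightarrow> preA A n ! i = mbs A i"
proof (induct n)
  case 0 then show ?case by simp
next
  case (Suc n)
  show ?case
  proof (cases "i < n")
    case True then show ?thesis using Suc by (simp add: nth_append length_preA)
  next
    case False then have "i = n" using Suc by simp
    then show ?thesis by (simp add: mbs_def)
  qed
qed

lemma mbs_ext: "badA A f \<Longrightarrow> \<exists>g\<in>extA A (preA A n). \<forall>i<n. g i = mbs A i"
  using preA_nonempty[of A f n] by (auto simp: extA_def length_preA preA_nth)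

lemma mbs_bad: assumes "badA A f" shows "badA A (mbs A)"
  unfolding badA_def
proof (intro conjI allI impI)
  fix i
  obtain g where "g\<in>extA A (preA A (Suc i))" "\<forall>k<Suc i. g k = mbs A k"
    using mbs_ext[OF assms] by blast
  then have "g i = mbs A i" "set (g i) \<subseteq> A" unfolding extA_def badA_def by blast+
  then show "set (mbs A i) \<subseteq> A" by simp
next
  fix i j :: nat assume ij: "i < j"
  obtain g where "g\<in>extA A (preA A (Suc j))" "\<forall>k<Suc j. g k = mbs A k"
    using mbs_ext[OF assms] by blast
  then have gb: "badA A g" "\<forall>k<Suc j. g k = mbs A k" unfolding extA_def by auto
  have "g i = mbs A i" "g j = mbs A j" using gb(2) ij by auto
  moreover have "\<not> subseq (g i) (g j)" using gb(1) ij unfolding badA_def by blast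
  ultimately show "\<not> subseq (mbs A i) (mbs A j)" by simp
qed

lemma mbs_min:
  assumes "badA A f" "badA A h" "\<forall>i<n. h i = mbs A i"
  shows "length (mbs A n) \<le> length (h n)"
proof -
  have h: "h \<in> extA A (preA A n)" using assms by (simp add: extA_def length_preA preA_nth)
  have "mbs A n = chooseA A (preA A n)" by (simp add: mbs_def length_preA nth_append)
  with chooseA_spec[of A "preA A n"] h show ?thesis by (auto simp: length_preA)
qed

lemma higman:
  assumes fin: "finite A"
  shows "\<not> badA A f"
proof
  assume bf: "badA A f"
  define m where "m = mbs A"
  have bm: "badA A m" using mbs_bad[OF bf] by (simp add: m_def)
  have ne: "m i \<noteq> []" for i
  proof
    assume "m i = []"
    then have "subseq (m i) (m (Suc i))" by simp
    with bm show False by (auto simp: badA_def)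
  qed
  have hdA: "hd (m i) \<in> A" for i
    using bm ne[of i] by (auto simp: badA_def) (metis hd_in_set subsetD)
  have "\<exists>a. infinite {i. hd (m i) = a}"
  proof (rule ccontr)
    assume "\<not> ?thesis"
    then have "finite (\<Union>a\<in>A. {i. hd (m i) = a})" using fin by auto
    moreover have "UNIV \<subseteq> (\<Union>a\<in>A. {i. hd (m i) = a})" using hdA by auto
    ultimately show False using infinite_UNIV_nat finite_subset by blast
  qed
  then obtain a where inf: "infinite {i. hd (m i) = a}" by blast
  define \<phi> where "\<phi> = enumerate {i. hd (m i) = a}"
  have smp: "strict_mono \<phi>" using strict_mono_enumerate[OF inf] by (simp add: \<phi>_def)
  have hda: "hd (m (\<phi> k)) = a" for k using enumerate_in_set[OF inf] by (simp add: \<phi>_def)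
  have mphi: "m (\<phi> k) = a # tl (m (\<phi> k))" for k using hda[of k] ne[of "\<phi> k"]
    by (cases "m (\<phi> k)") auto
  define g where "g i = (if i < \<phi> 0 then m i else tl (m (\<phi> (i - \<phi> 0))))" for i
  have bg: "badA A g"
    unfolding badA_def
  proof (intro conjI allI impI)
    fix i show "set (g i) \<subseteq> A" using bm
      by (auto simp: g_def badA_def dest!: list.set_sel(2)[OF ne])
  next
    fix i j :: nat assume ij: "i < j"
    show "\<not> subseq (g i) (g j)"
    proof (cases "j < \<phi> 0")
      case True then show ?thesis using ij bm by (auto simp: g_def badA_def)
    next
      case jn: False
      show ?thesis
      proof (cases "i < \<phi> 0")
        case True
        have le: "\<phi> 0 \<le> \<phi> (j - \<phi> 0)" using smp by (simp add: strict_mono_less_eq)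
        show ?thesis
        proof
          assume "subseq (g i) (g j)"
          then have "subseq (m i) (tl (m (\<phi> (j - \<phi> 0))))" using True jn by (simp add: g_def)
          then have "subseq (m i) (a # tl (m (\<phi> (j - \<phi> 0))))" by auto
          then have "subseq (m i) (m (\<phi> (j - \<phi> 0)))" using mphi by metis
          moreover have "i < \<phi> (j - \<phi> 0)" using True le by simp
          ultimately show False using bm by (auto simp: badA_def)
        qed
      next
        case False
        have lt: "\<phi> (i - \<phi> 0) < \<phi> (j - \<phi> 0)" using smp ij False
          by (simp add: strict_mono_less)
        show ?thesis
        proof
          assume "subseq (g i) (g j)"
          then have "subseq (tl (m (\<phi> (i - \<phi> 0)))) (tl (m (\<phi> (j - \<phi> 0))))"
            using False jn by (simp add: g_def)
          then have "subseq (a # tl (m (\<phi> (i - \<phi> 0)))) (a # tl (m (\<phi> (j - \<phi> 0))))" by auto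
          then have "subseq (m (\<phi> (i - \<phi> 0))) (m (\<phi> (j - \<phi> 0)))" using mphi by metis
          with lt show False using bm by (auto simp: badA_def)
        qed
      qed
    qed
  qed
  have "\<forall>i<\<phi> 0. g i = mbs A i" by (simp add: g_def m_def)
  from mbs_min[OF bf bg this] have 1: "length (mbs A (\<phi> 0)) \<le> length (g (\<phi> 0))" .
  have "length (g (\<phi> 0)) < length (m (\<phi> 0))"
    using ne[of "\<phi> 0"] by (simp add: g_def)
  then have "length (g (\<phi> 0)) < length (mbs A (\<phi> 0))" by (simp add: m_def)
  with 1 show False by simp
qed

lemma emb_fun:
  "list_emb P us vs \<Longrightarrow> us = map p xs \<Longrightarrow> vs = map q ys \<Longrightarrow>
   sorted_wrt (<) xs \<Longrightarrow> sorted_wrt (<) (ys :: nat list) \<Longrightarrow>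
   \<exists>g. strict_mono_on (set xs) g \<and> (\<forall>x\<in>set (xs :: nat list). g x \<in> set ys \<and> P (p x) (q (g x)))"
proof (induction us vs arbitrary: xs ys rule: list_emb.induct)
  case (list_emb_Nil ys)
  then show ?case by (auto simp: strict_mono_on_def)
next
  case (list_emb_Cons us vs v)
  then obtain y ys' where ys: "ys = y # ys'" "vs = map q ys'" by (cases ys) auto
  with list_emb_Cons.IH[of xs ys'] list_emb_Cons.prems obtain g where
    "strict_mono_on (set xs) g" "\<forall>x\<in>set xs. g x \<in> set ys' \<and> P (p x) (q (g x))" by auto
  then show ?case using ys by auto
next
  case (list_emb_Cons2 u v us vs)
  then obtain x xs' where xs: "xs = x # xs'" "us = map p xs'" "u = p x" by (cases xs) auto
  from list_emb_Cons2 obtain y ys' where ys: "ys = y # ys'" "vs = map q ys'" "v = q y" by (cases ys) auto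
  from list_emb_Cons2.IH[of xs' ys'] list_emb_Cons2.prems xs ys obtain g where
    g: "strict_mono_on (set xs') g" "\<forall>x\<in>set xs'. g x \<in> set ys' \<and> P (p x) (q (g x))" by auto
  have sx: "\<forall>a\<in>set xs'. x < a" and sy: "\<forall>b\<in>set ys'. y < b"
    using list_emb_Cons2.prems xs ys by auto
  define g' where "g' = g(x := y)"
  have "strict_mono_on (set xs) g'"
    unfolding strict_mono_on_def
  proof (intro allI impI)
    fix a b assume ab: "a \<in> set xs \<and> b \<in> set xs \<and> a < b"
    then have bx: "b \<in> set xs'" "b \<noteq> x" using xs sx by auto
    show "g' a < g' b"
    proof (cases "a = x")
      case True then show ?thesis using bx g(2) sy by (auto simp: g'_def)
    next
      case False then have "a \<in> set xs'" using ab xs by auto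
      then show ?thesis using g(1) bx ab False by (auto simp: g'_def strict_mono_on_def)
    qed
  qed
  moreover have "\<forall>a\<in>set xs. g' a \<in> set ys \<and> P (p a) (q (g' a))"
    using g(2) sx xs ys list_emb_Cons2.hyps(1) by (auto simp: g'_def)
  ultimately show ?case by blast
qed


lemma pigeon_len:
  assumes "\<forall>i. (h :: nat \<Rightarrow> nat) i \<le> B" shows "\<exists>n. infinite {i. h i = n}"
proof (rule ccontr)
  assume "\<not> ?thesis"
  then have "finite (\<Union>n\<in>{..B}. {i. h i = n})" by auto
  moreover have "UNIV \<subseteq> (\<Union>n\<in>{..B}. {i. h i = n})" using assms by auto
  ultimately show False using infinite_UNIV_nat finite_subset by blast
qed

lemma le_RL_from_words:
  assumes fS: "finite (\<Union> (set S))" and fT: "finite (\<Union> (set T))"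
    and len: "length S = n" "length T = n"
    and sub: "subseq (map (\<lambda>x. {j. j < n \<and> x \<in> S ! j}) (sorted_list_of_set (\<Union> (set S))))
                     (map (\<lambda>x. {j. j < n \<and> x \<in> T ! j}) (sorted_list_of_set (\<Union> (set T))))"
  shows "le_RL (d, S) (e, T)"
proof -
  let ?xs = "sorted_list_of_set (\<Union> (set S))"
  let ?ys = "sorted_list_of_set (\<Union> (set T))"
  obtain g where g: "strict_mono_on (set ?xs) g"
    "\<forall>x\<in>set ?xs. g x \<in> set ?ys \<and> {j. j < n \<and> x \<in> S ! j} = {j. j < n \<and> g x \<in> T ! j}"
    using emb_fun[OF sub refl refl] by auto
  have setxs: "set ?xs = \<Union> (set S)" using fS by simp
  have inU: "i < n \<Longrightarrow> S ! i \<subseteq> \<Union> (set S)" for i using len by (auto intro: nth_mem)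
  show ?thesis
    unfolding le_RL_def Let_def snd_conv
  proof (intro exI[of _ id] exI[of _ "\<lambda>_. g"] conjI allI impI ballI)
    show "strict_mono_on {..<length S} id" by (simp add: strict_mono_on_def)
  next
    fix i assume "i < length S" then show "id i < length T" using len by simp
  next
    fix i assume i: "i < length S"
    show "strict_mono_on (S ! i) g"
      using g(1) inU[of i] i len setxs unfolding strict_mono_on_def by blast
  next
    fix i assume i: "i < length S"
    show "g ` (S ! i) \<subseteq> T ! id i"
    proof
      fix z assume "z \<in> g ` (S ! i)"
      then obtain x where x: "x \<in> S ! i" "z = g x" by blast
      then have "x \<in> set ?xs" using inU[of i] i len setxs by auto
      then have "{j. j < n \<and> x \<in> S ! j} = {j. j < n \<and> g x \<in> T ! j}" using g(2) by blast
      moreover have "i \<in> {j. j < n \<and> x \<in> S ! j}" using x i len by simp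
      ultimately show "z \<in> T ! id i" using x by auto
    qed
  qed simp
qed

theorem mainTheorem5:
  fixes M :: nat
  shows "\<not> (\<exists>Sq :: nat \<Rightarrow> reading_list. antichain_seq_RL M Sq \<and>
              (\<exists>B. \<forall>i. snd (rl_type (Sq i)) \<le> B))"
proof
  assume "\<exists>Sq :: nat \<Rightarrow> reading_list. antichain_seq_RL M Sq \<and>
              (\<exists>B. \<forall>i. snd (rl_type (Sq i)) \<le> B)"
  then obtain Sq B where ac: "antichain_seq_RL M Sq" and bd: "\<forall>i. length (snd (Sq i)) \<le> B"
    by (auto simp: rl_type_def)
  obtain n where inf: "infinite {i. length (snd (Sq i)) = n}"
    using pigeon_len[of "\<lambda>i. length (snd (Sq i))" B] bd by auto
  define \<phi> where "\<phi> = enumerate {i. length (snd (Sq i)) = n}"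
  have smp: "strict_mono \<phi>" using strict_mono_enumerate[OF inf] by (simp add: \<phi>_def)
  have lenphi: "length (snd (Sq (\<phi> k))) = n" for k using enumerate_in_set[OF inf] by (simp add: \<phi>_def)
  have fin: "finite (\<Union> (set (snd (Sq k))))" for k
  proof -
    have "Sq k \<in> RL M" using ac by (simp add: antichain_seq_RL_def)
    then have "\<forall>A \<in> set (snd (Sq k)). A \<subseteq> {1..M * fst (Sq k)}"
      by (cases "Sq k") (auto simp: RL_def)
    then show ?thesis by (auto intro: finite_subset)
  qed
  define w where "w k = map (\<lambda>x. {j. j < n \<and> x \<in> snd (Sq (\<phi> k)) ! j})
      (sorted_list_of_set (\<Union> (set (snd (Sq (\<phi> k))))))" for k
  have "\<not> badA (Pow {..<n}) w" by (rule higman) simp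
  moreover have "\<forall>k. set (w k) \<subseteq> Pow {..<n}" by (auto simp: w_def)
  ultimately obtain i j where ij: "i < j" "subseq (w i) (w j)" unfolding badA_def by blast
  have "le_RL (fst (Sq (\<phi> i)), snd (Sq (\<phi> i))) (fst (Sq (\<phi> j)), snd (Sq (\<phi> j)))"
    by (rule le_RL_from_words[OF fin fin lenphi lenphi]) (use ij in \<open>simp add: w_def\<close>)
  then have "le_RL (Sq (\<phi> i)) (Sq (\<phi> j))" by simp
  moreover have "\<phi> i \<noteq> \<phi> j" using smp ij(1) by (metis less_irrefl strict_mono_less)
  ultimately show False using ac by (auto simp: antichain_seq_RL_def)
qed

end
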